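(* Let $n\geq 2$ and let $\mathcal{G}=(\mathcal{V},\mathcal{E})$ be a directed graph on $\mathcal{V}=\{1,\ldots,n\}$ in which every node has at least one outgoing edge, with hyperlink matrix $A$, let $m\in(0,1)$, and let $x^*$ be the PageRank vector. Let $\{\phi(k)\}_{k\geq 0}$ be a sequence of subsets $\phi(k)\subset\mathcal{V}$ such that every $i\in\mathcal{V}$ belongs to $\phi(k)$ for infinitely many $k$. Consider the algorithm with initial states $x_i(0)=z_i(0)=m/n$ for all $i$, and for $k\geq 0$ and each $i\in\mathcal{V}$, $$x_i(k+1)=x_i(k)+\sum_{j\in\mathcal{L}_i^{\text{in}}\cap\phi(k)}\frac{1-m}{n_j}z_j(k),$$ $$z_i(k+1)=\begin{cases}\displaystyle\sum_{j\in\mathcal{L}_i^{\text{in}}\cap\phi(k)}\frac{1-m}{n_j}z_j(k)&\text{if } i\in\phi(k),\\ \displaystyle z_i(k)+\sum_{j\in\mathcal{L}_i^{\text{in}}\cap\phi(k)}\frac{1-m}{n_j}z_j(k)&\text{otherwise.}\end{cases}$$ Then $x(k)\to x^*$ as $k\to\infty$. If, in addition, there is $T>0$ such that each page belongs to at least one of $\phi(k),\phi(k+1),\ldots,\phi(k+T-1)$ for every $k\geq 0$, then the convergence is exponential, i.e., there exist $C>0$ and $\rho\in(0,1)$ with $\|x(k)-x^*\|\leq C\rho^k$ for all $k\geq 0$.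
   Context: Write $(i,j)\in\mathcal{E}$ if page $i$ has a link to page $j$. $\mathcal{L}_j^{\text{out}}=\{i:(j,i)\in\mathcal{E}\}$, $\mathcal{L}_i^{\text{in}}=\{j:(j,i)\in\mathcal{E}\}$, and $n_j=|\mathcal{L}_j^{\text{out}}|\geq 1$. The hyperlink matrix $A=(a_{ij})$ is defined by $a_{ij}=1/n_j$ if $i\in\mathcal{L}_j^{\text{out}}$ and $a_{ij}=0$ otherwise (column stochastic). The PageRank vector $x^*$ satisfies $x^*=(1-m)Ax^*+\frac{m}{n}\mathbf{1}_n$ and $\mathbf{1}_n^Tx^*=1$. Here $x(k)=(x_1(k),\ldots,x_n(k))^T$. *)

theory Defs
  imports "HOL-Analysis.Analysis"
begin

text \<open>Nodes are 1..n; the edge set E contains (i,j) when page i links to page j.\<close>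

definition out_links :: "(nat \<times> nat) set \<Rightarrow> nat \<Rightarrow> nat set" where
  "out_links E j = {i. (j, i) \<in> E}"

definition in_links :: "(nat \<times> nat) set \<Rightarrow> nat \<Rightarrow> nat set" where
  "in_links E i = {j. (j, i) \<in> E}"

definition outdeg :: "(nat \<times> nat) set \<Rightarrow> nat \<Rightarrow> nat" where
  "outdeg E j = card (out_links E j)"

definition hyperlink :: "(nat \<times> nat) set \<Rightarrow> nat \<Rightarrow> nat \<Rightarrow> real" where
  "hyperlink E i j = (if i \<in> out_links E j then 1 / real (outdeg E j) else 0)"

definition is_pagerank :: "nat \<Rightarrow> (nat \<times> nat) set \<Rightarrow> real \<Rightarrow> (nat \<Rightarrow> real) \<Rightarrow> bool" where
  "is_pagerank n E m xs \<longleftrightarrow>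
     (\<forall>i\<in>{1..n}. xs i = (1 - m) * (\<Sum>j\<in>{1..n}. hyperlink E i j * xs j) + m / real n) \<and>
     (\<Sum>i\<in>{1..n}. xs i) = 1"

primrec pr_xz :: "nat \<Rightarrow> (nat \<times> nat) set \<Rightarrow> real \<Rightarrow> (nat \<Rightarrow> nat set) \<Rightarrow> nat
                    \<Rightarrow> (nat \<Rightarrow> real) \<times> (nat \<Rightarrow> real)" where
  "pr_xz n E m phi 0 = ((\<lambda>i. m / real n), (\<lambda>i. m / real n))"
| "pr_xz n E m phi (Suc k) =
     (let x = fst (pr_xz n E m phi k); z = snd (pr_xz n E m phi k);
          f = (\<lambda>i. \<Sum>j\<in>in_links E i \<inter> phi k. (1 - m) / real (outdeg E j) * z j)
      in ((\<lambda>i. x i + f i), (\<lambda>i. if i \<in> phi k then f i else z i + f i)))"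

definition pr_x :: "nat \<Rightarrow> (nat \<times> nat) set \<Rightarrow> real \<Rightarrow> (nat \<Rightarrow> nat set) \<Rightarrow> nat \<Rightarrow> nat \<Rightarrow> real" where
  "pr_x n E m phi k = fst (pr_xz n E m phi k)"

definition vnorm :: "nat \<Rightarrow> (nat \<Rightarrow> real) \<Rightarrow> real" where
  "vnorm n v = L2_set v {1..n}"

end

theory Submission
  imports Defs
begin

locale prs =
  fixes n :: nat and E :: "(nat \<times> nat) set" and m :: real
    and xs :: "nat \<Rightarrow> real" and phi :: "nat \<Rightarrow> nat set"
  assumes n2: "n \<ge> 2"
    and E_nodes: "E \<subseteq> {1..n} \<times> {1..n}"
    and out_pos: "\<forall>j\<in>{1..n}. outdeg E j \<ge> 1"
    and m0: "0 < m" and m1: "m < 1"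
    and pr: "is_pagerank n E m xs"
    and phi_sub: "\<forall>k. phi k \<subseteq> {1..n}"
begin

definition "xx k = fst (pr_xz n E m phi k)"
definition "zz k = snd (pr_xz n E m phi k)"
definition "dz k i = (if i \<in> phi k then zz k i else 0)"
definition "FF k i = (\<Sum>j\<in>in_links E i \<inter> phi k. (1 - m) / real (outdeg E j) * zz k j)"
definition "SS k = (\<Sum>i\<in>{1..n}. zz k i)"

abbreviation "a \<equiv> hyperlink E"

lemma xx0: "xx 0 i = m / n" and zz0: "zz 0 i = m / n"
  by (simp_all add: xx_def zz_def)

lemma xxS: "xx (Suc k) i = xx k i + FF k i"
  by (simp add: xx_def zz_def FF_def Let_def)

lemma zzS: "zz (Suc k) i = zz k i - dz k i + FF k i"
  by (simp add: xx_def zz_def FF_def dz_def Let_def)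

lemma zzS': "i \<notin> phi k \<Longrightarrow> zz (Suc k) i = zz k i + FF k i"
  by (simp add: zzS dz_def)

lemma a_nonneg: "a i j \<ge> 0"
  by (simp add: hyperlink_def)

lemma out_sub: "out_links E j \<subseteq> {1..n}"
  using E_nodes by (auto simp: out_links_def)

lemma in_sub: "in_links E i \<subseteq> {1..n}"
  using E_nodes by (auto simp: in_links_def)

lemma colsum: assumes "j \<in> {1..n}" shows "(\<Sum>i\<in>{1..n}. a i j) = 1"
proof -
  have "(\<Sum>i\<in>{1..n}. a i j) = (\<Sum>i\<in>{1..n}. if i \<in> out_links E j then 1 / real (outdeg E j) else 0)"
    by (simp add: hyperlink_def)
  also have "\<dots> = (\<Sum>i\<in>{i\<in>{1..n}. i \<in> out_links E j}. 1 / real (outdeg E j))"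
    by (rule sum.inter_filter[symmetric]) simp
  also have "{i\<in>{1..n}. i \<in> out_links E j} = out_links E j" using out_sub[of j] by blast
  also have "(\<Sum>i\<in>out_links E j. 1 / real (outdeg E j)) = 1"
  proof -
    have "outdeg E j \<ge> 1" using out_pos assms by blast
    then show ?thesis by (simp add: outdeg_def)
  qed
  finally show ?thesis .
qed

lemma FF_eq: "FF k i = (1 - m) * (\<Sum>j\<in>{1..n}. a i j * dz k j)"
proof -
  have "(\<Sum>j\<in>{1..n}. a i j * dz k j) = (\<Sum>j\<in>{1..n}. if j \<in> in_links E i \<inter> phi k then zz k j / real (outdeg E j) else 0)"
    by (rule sum.cong) (auto simp: hyperlink_def dz_def in_links_def out_links_def)
  also have "\<dots> = (\<Sum>j\<in>{j\<in>{1..n}. j \<in> in_links E i \<inter> phi k}. zz k j / real (outdeg E j))"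
    by (rule sum.inter_filter[symmetric]) simp
  also have "{j\<in>{1..n}. j \<in> in_links E i \<inter> phi k} = in_links E i \<inter> phi k" using in_sub[of i] by blast
  finally show ?thesis by (simp add: FF_def sum_distrib_left)
qed

lemma zz_nonneg: "zz k i \<ge> 0"
proof (induction k arbitrary: i)
  case 0 then show ?case using m0 by (simp add: zz0)
next
  case (Suc k)
  have "FF k i \<ge> 0" unfolding FF_def using Suc m1 by (intro sum_nonneg) auto
  then show ?case using Suc by (cases "i \<in> phi k") (auto simp: zzS dz_def)
qed

lemma dz_nonneg: "dz k i \<ge> 0" using zz_nonneg by (simp add: dz_def)

lemma FF_nonneg: "FF k i \<ge> 0"
  unfolding FF_def using zz_nonneg m1 by (intro sum_nonneg) auto

lemma sumFF: "(\<Sum>i\<in>{1..n}. FF k i) = (1 - m) * (\<Sum>j\<in>{1..n}. dz k j)"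
proof -
  have "(\<Sum>i\<in>{1..n}. FF k i) = (1 - m) * (\<Sum>i\<in>{1..n}. \<Sum>j\<in>{1..n}. a i j * dz k j)"
    by (simp add: FF_eq sum_distrib_left)
  also have "(\<Sum>i\<in>{1..n}. \<Sum>j\<in>{1..n}. a i j * dz k j) = (\<Sum>j\<in>{1..n}. \<Sum>i\<in>{1..n}. a i j * dz k j)"
    by (rule sum.swap)
  also have "\<dots> = (\<Sum>j\<in>{1..n}. dz k j)"
  proof (rule sum.cong[OF refl])
    fix j assume "j \<in> {1..n}"
    then show "(\<Sum>i\<in>{1..n}. a i j * dz k j) = dz k j"
      by (simp only: sum_distrib_right[symmetric] colsum)
  qed
  finally show ?thesis .
qed

lemma SS_Suc: "SS (Suc k) = SS k - m * (\<Sum>j\<in>{1..n}. dz k j)"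
proof -
  have "SS (Suc k) = SS k - sum (dz k) {1..n} + sum (FF k) {1..n}"
    by (simp add: SS_def zzS sum.distrib sum_subtractf)
  then show ?thesis using sumFF[of k] by (simp add: algebra_simps)
qed

lemma SS_nonneg: "SS k \<ge> 0" unfolding SS_def using zz_nonneg by (simp add: sum_nonneg)

lemma SS_mono: "k \<le> l \<Longrightarrow> SS l \<le> SS k"
proof (induction l rule: dec_induct)
  case (step l)
  have "(\<Sum>j\<in>{1..n}. dz l j) \<ge> 0" by (simp add: sum_nonneg dz_nonneg)
  then show ?case using step m0 by (simp add: SS_Suc) (smt (verit) mult_nonneg_nonneg)
qed simp

lemma SS0: "SS 0 = m" using n2 by (simp add: SS_def zz0)

lemma invariant: "i \<in> {1..n} \<Longrightarrow> xx k i = (1 - m) * (\<Sum>j\<in>{1..n}. a i j * (xx k j - zz k j)) + m / n"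
proof (induction k arbitrary: i)
  case 0 then show ?case by (simp add: xx0 zz0)
next
  case (Suc k)
  define P where "P = (\<Sum>j\<in>{1..n}. a i j * (xx k j - zz k j))"
  define Q where "Q = (\<Sum>j\<in>{1..n}. a i j * dz k j)"
  have "(\<Sum>j\<in>{1..n}. a i j * (xx (Suc k) j - zz (Suc k) j)) = (\<Sum>j\<in>{1..n}. a i j * (xx k j - zz k j) + a i j * dz k j)"
    by (rule sum.cong) (simp_all add: xxS zzS algebra_simps)
  also have "\<dots> = P + Q" unfolding P_def Q_def by (rule sum.distrib)
  finally have h: "(\<Sum>j\<in>{1..n}. a i j * (xx (Suc k) j - zz (Suc k) j)) = P + Q" .
  have x1: "xx (Suc k) i = xx k i + (1 - m) * Q" by (simp add: xxS FF_eq Q_def)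
  have x2: "xx k i = (1 - m) * P + m / n" using Suc by (simp add: P_def)
  have d: "(1 - m) * (P + Q) = (1 - m) * P + (1 - m) * Q" by (rule distrib_left)
  show ?case unfolding h using x1 x2 d by linarith
qed

lemma err_bound: "(\<Sum>i\<in>{1..n}. \<bar>xx k i - xs i\<bar>) \<le> SS k / m"
proof -
  define e where "e i = xx k i - xs i" for i
  have xs_eq: "\<And>i. i \<in> {1..n} \<Longrightarrow> xs i = (1 - m) * (\<Sum>j\<in>{1..n}. a i j * xs j) + m / n"
    using pr by (simp add: is_pagerank_def)
  have ei: "e i = (1 - m) * (\<Sum>j\<in>{1..n}. a i j * (e j - zz k j))" if "i \<in> {1..n}" for i
  proof -
    have "(\<Sum>j\<in>{1..n}. a i j * (e j - zz k j)) = (\<Sum>j\<in>{1..n}. a i j * (xx k j - zz k j) - a i j * xs j)"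
      by (rule sum.cong) (simp_all add: e_def algebra_simps)
    also have "\<dots> = (\<Sum>j\<in>{1..n}. a i j * (xx k j - zz k j)) - (\<Sum>j\<in>{1..n}. a i j * xs j)"
      by (rule sum_subtractf)
    finally have h: "(\<Sum>j\<in>{1..n}. a i j * (e j - zz k j)) = (\<Sum>j\<in>{1..n}. a i j * (xx k j - zz k j)) - (\<Sum>j\<in>{1..n}. a i j * xs j)" .
    define S1 where "S1 = (\<Sum>j\<in>{1..n}. a i j * (xx k j - zz k j))"
    define S2 where "S2 = (\<Sum>j\<in>{1..n}. a i j * xs j)"
    have d: "(1 - m) * (S1 - S2) = (1 - m) * S1 - (1 - m) * S2" by (rule right_diff_distrib)
    have ee: "e i = xx k i - xs i" by (simp add: e_def)
    show ?thesis unfolding h S1_def[symmetric] S2_def[symmetric]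
      using invariant[OF that, of k, folded S1_def] xs_eq[OF that, folded S2_def] d ee by linarith
  qed
  have "\<bar>e i\<bar> \<le> (1 - m) * (\<Sum>j\<in>{1..n}. a i j * (\<bar>e j\<bar> + zz k j))" if "i \<in> {1..n}" for i
  proof -
    have "\<bar>e i\<bar> = (1 - m) * \<bar>\<Sum>j\<in>{1..n}. a i j * (e j - zz k j)\<bar>" using ei[OF that] m1 by (simp add: abs_mult)
    also have "\<dots> \<le> (1 - m) * (\<Sum>j\<in>{1..n}. \<bar>a i j * (e j - zz k j)\<bar>)"
      using m1 by (intro mult_left_mono sum_abs) auto
    also have "\<dots> \<le> (1 - m) * (\<Sum>j\<in>{1..n}. a i j * (\<bar>e j\<bar> + zz k j))"
      using m1 zz_nonneg a_nonneg
      by (intro mult_left_mono sum_mono) (auto simp: abs_mult intro!: mult_left_mono,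
          metis abs_of_nonneg abs_triangle_ineq4)
    finally show ?thesis .
  qed
  then have "(\<Sum>i\<in>{1..n}. \<bar>e i\<bar>) \<le> (\<Sum>i\<in>{1..n}. (1 - m) * (\<Sum>j\<in>{1..n}. a i j * (\<bar>e j\<bar> + zz k j)))"
    by (rule sum_mono)
  also have "\<dots> = (1 - m) * (\<Sum>i\<in>{1..n}. \<Sum>j\<in>{1..n}. a i j * (\<bar>e j\<bar> + zz k j))"
    by (rule sum_distrib_left[symmetric])
  also have "\<dots> = (1 - m) * (\<Sum>j\<in>{1..n}. \<Sum>i\<in>{1..n}. a i j * (\<bar>e j\<bar> + zz k j))"
    by (subst sum.swap) (rule refl)
  also have "\<dots> = (1 - m) * (\<Sum>j\<in>{1..n}. \<bar>e j\<bar> + zz k j)"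
  proof -
    have c: "(\<Sum>i\<in>{1..n}. a i j * (\<bar>e j\<bar> + zz k j)) = \<bar>e j\<bar> + zz k j" if "j \<in> {1..n}" for j
      by (simp only: sum_distrib_right[symmetric] colsum[OF that]) simp
    have s: "(\<Sum>j\<in>{1..n}. \<Sum>i\<in>{1..n}. a i j * (\<bar>e j\<bar> + zz k j)) = (\<Sum>j\<in>{1..n}. \<bar>e j\<bar> + zz k j)"
      by (rule sum.cong[OF refl]) (rule c)
    show ?thesis by (simp only: s)
  qed
  also have "\<dots> = (1 - m) * (\<Sum>j\<in>{1..n}. \<bar>e j\<bar>) + (1 - m) * SS k"
    by (simp add: SS_def sum.distrib algebra_simps)
  finally have "m * (\<Sum>i\<in>{1..n}. \<bar>e i\<bar>) \<le> (1 - m) * SS k" by (simp add: algebra_simps)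
  also have "\<dots> \<le> SS k" using mult_nonneg_nonneg[OF less_imp_le[OF m0] SS_nonneg[of k]] by (simp add: left_diff_distrib)
  finally show ?thesis using m0 by (simp add: e_def field_simps)
qed

lemma vnorm_bound: "vnorm n (\<lambda>i. pr_x n E m phi k i - xs i) \<le> SS k / m"
  using L2_set_le_sum_abs[of "\<lambda>i. xx k i - xs i" "{1..n}"] err_bound[of k]
  by (simp add: vnorm_def pr_x_def xx_def)

lemma zz_inactive: "k \<le> t \<Longrightarrow> (\<forall>s\<in>{k..<t}. i \<notin> phi s) \<Longrightarrow> zz k i \<le> zz t i"
proof (induction t rule: dec_induct)
  case (step t)
  then have "i \<notin> phi t" by auto
  then have "zz (Suc t) i = zz t i + FF t i" by (rule zzS')
  then show ?case using step FF_nonneg[of t i] by auto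
qed simp

lemma SS_shift: "SS (k + d) = SS k - m * (\<Sum>t\<in>{k..<k+d}. \<Sum>i\<in>{1..n}. dz t i)"
proof (induction d)
  case (Suc d)
  have "SS (k + Suc d) = SS (k + d) - m * (\<Sum>i\<in>{1..n}. dz (k + d) i)" by (simp add: SS_Suc)
  also have "(\<Sum>t\<in>{k..<k + Suc d}. \<Sum>i\<in>{1..n}. dz t i) = (\<Sum>t\<in>{k..<k+d}. \<Sum>i\<in>{1..n}. dz t i) + (\<Sum>i\<in>{1..n}. dz (k + d) i)"
    by simp
  ultimately show ?case using Suc by (simp add: algebra_simps)
qed simp

lemma SS_contract:
  assumes kK: "k \<le> K" and cov: "\<forall>i\<in>{1..n}. \<exists>t\<in>{k..<K}. i \<in> phi t"
  shows "SS K \<le> (1 - m) * SS k"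
proof -
  define ti where "ti i = (LEAST t. k \<le> t \<and> i \<in> phi t)" for i
  have ti: "k \<le> ti i \<and> ti i < K \<and> i \<in> phi (ti i) \<and> (\<forall>s\<in>{k..<ti i}. i \<notin> phi s)" if iin: "i \<in> {1..n}" for i
  proof -
    obtain t where t: "t \<in> {k..<K}" "i \<in> phi t" using bspec[OF cov iin] by (elim bexE)
    have ex: "k \<le> t \<and> i \<in> phi t" using t by simp
    have P: "k \<le> ti i \<and> i \<in> phi (ti i)" unfolding ti_def by (rule LeastI[of "\<lambda>t. k \<le> t \<and> i \<in> phi t" t, OF ex])
    have "ti i \<le> t" unfolding ti_def by (rule Least_le[of "\<lambda>t. k \<le> t \<and> i \<in> phi t" t, OF ex])
    then have lt: "ti i < K" using t(1) by simp
    have nb: "\<forall>s\<in>{k..<ti i}. i \<notin> phi s"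
    proof
      fix s assume s: "s \<in> {k..<ti i}"
      then have "s < (LEAST t. k \<le> t \<and> i \<in> phi t)" "k \<le> s" unfolding ti_def by auto
      then show "i \<notin> phi s" using not_less_Least[of s "\<lambda>t. k \<le> t \<and> i \<in> phi t"] by blast
    qed
    show ?thesis using P lt nb by blast
  qed
  have "SS k \<le> (\<Sum>i\<in>{1..n}. dz (ti i) i)"
    unfolding SS_def
  proof (rule sum_mono)
    fix i assume i: "i \<in> {1..n}"
    have "zz k i \<le> zz (ti i) i" using ti[OF i] by (intro zz_inactive) auto
    then show "zz k i \<le> dz (ti i) i" using ti[OF i] by (simp add: dz_def)
  qed
  also have "\<dots> \<le> (\<Sum>i\<in>{1..n}. \<Sum>t\<in>{k..<K}. dz t i)"
  proof (rule sum_mono)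
    fix i assume i: "i \<in> {1..n}"
    show "dz (ti i) i \<le> (\<Sum>t\<in>{k..<K}. dz t i)"
      by (rule member_le_sum[of "ti i" "{k..<K}" "\<lambda>t. dz t i"]) (use ti[OF i] dz_nonneg in auto)
  qed
  also have "\<dots> = (\<Sum>t\<in>{k..<K}. \<Sum>i\<in>{1..n}. dz t i)" by (rule sum.swap)
  finally have le: "SS k \<le> (\<Sum>t\<in>{k..<K}. \<Sum>i\<in>{1..n}. dz t i)" .
  have "SS K = SS k - m * (\<Sum>t\<in>{k..<K}. \<Sum>i\<in>{1..n}. dz t i)"
    using SS_shift[of k "K - k"] kK by simp
  also have "\<dots> \<le> SS k - m * SS k" using le m0 by (simp add: mult_left_mono)
  finally show ?thesis by (simp add: algebra_simps)
qed

lemma conv_part: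
  assumes phi_inf: "\<forall>i\<in>{1..n}. infinite {k. i \<in> phi k}"
  shows "(\<lambda>k. vnorm n (\<lambda>i. pr_x n E m phi k i - xs i)) \<longlonglongrightarrow> 0"
proof -
  have ex: "\<exists>K\<ge>k. SS K \<le> (1 - m) * SS k" for k
  proof -
    have "\<forall>i\<in>{1..n}. \<exists>t. k \<le> t \<and> i \<in> phi t"
      using phi_inf by (auto simp: infinite_nat_iff_unbounded_le)
    then obtain g where g: "\<forall>i\<in>{1..n}. k \<le> g i \<and> i \<in> phi (g i)" by metis
    define K where "K = k + Suc (Max (g ` {1..n}))"
    have "\<forall>i\<in>{1..n}. \<exists>t\<in>{k..<K}. i \<in> phi t"
    proof
      fix i assume i: "i \<in> {1..n}"
      have gm: "g i \<le> Max (g ` {1..n})" using i by (intro Max_ge) auto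
      have "g i < K" using gm unfolding K_def by linarith
      moreover have "k \<le> g i" using g i by blast
      ultimately have "g i \<in> {k..<K}" by simp
      then show "\<exists>t\<in>{k..<K}. i \<in> phi t" using g i by blast
    qed
    then have "SS K \<le> (1 - m) * SS k" using SS_contract[of k K] unfolding K_def by simp
    moreover have "k \<le> K" unfolding K_def by simp
    ultimately show ?thesis by blast
  qed
  have pw: "\<exists>K. SS K \<le> (1 - m) ^ j * m" for j
  proof (induction j)
    case 0 show ?case using SS0 by (intro exI[of _ 0]) simp
  next
    case (Suc j)
    then obtain K where K: "SS K \<le> (1 - m) ^ j * m" by blast
    obtain K' where "SS K' \<le> (1 - m) * SS K" using ex by blast
    moreover have "(1 - m) * SS K \<le> (1 - m) * ((1 - m) ^ j * m)" using K m1 by (intro mult_left_mono) auto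
    ultimately show ?case by (intro exI[of _ K']) auto
  qed
  show ?thesis
  proof (rule LIMSEQ_I)
    fix r :: real assume r: "0 < r"
    obtain j where j: "(1 - m) ^ j < r" using real_arch_pow_inv[OF r, of "1 - m"] m0 by auto
    obtain K where K: "SS K \<le> (1 - m) ^ j * m" using pw by blast
    have "norm (vnorm n (\<lambda>i. pr_x n E m phi k i - xs i) - 0) < r" if "k \<ge> K" for k
    proof -
      have "vnorm n (\<lambda>i. pr_x n E m phi k i - xs i) \<le> SS k / m" by (rule vnorm_bound)
      also have "\<dots> \<le> SS K / m" using SS_mono[OF that] m0 by (simp add: divide_right_mono)
      also have "\<dots> \<le> (1 - m) ^ j" using K m0 by (simp add: field_simps)
      finally have "vnorm n (\<lambda>i. pr_x n E m phi k i - xs i) < r" using j by linarith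
      moreover have "vnorm n (\<lambda>i. pr_x n E m phi k i - xs i) \<ge> 0" by (simp add: vnorm_def)
      ultimately show ?thesis by simp
    qed
    then show "\<exists>no. \<forall>k\<ge>no. norm (vnorm n (\<lambda>i. pr_x n E m phi k i - xs i) - 0) < r" by blast
  qed
qed

lemma exp_part:
  assumes T: "T > 0" and win: "\<forall>k. \<forall>i\<in>{1..n}. \<exists>l\<in>{k..<k+T}. i \<in> phi l"
  shows "\<exists>C>0. \<exists>\<rho>. 0 < \<rho> \<and> \<rho> < 1 \<and>
                 (\<forall>k. vnorm n (\<lambda>i. pr_x n E m phi k i - xs i) \<le> C * \<rho> ^ k)"
proof -
  have step: "SS (k + T) \<le> (1 - m) * SS k" for k
    using SS_contract[of k "k + T"] win by auto
  have pw: "SS (q * T) \<le> (1 - m) ^ q * m" for q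
  proof (induction q)
    case 0 show ?case using SS0 by simp
  next
    case (Suc q)
    have "SS (Suc q * T) \<le> (1 - m) * SS (q * T)" using step[of "q * T"] by (simp add: add.commute)
    also have "\<dots> \<le> (1 - m) * ((1 - m) ^ q * m)" using Suc m1 by (intro mult_left_mono) auto
    finally show ?case by simp
  qed
  define \<rho> where "\<rho> = root T (1 - m)"
  have rho0: "0 < \<rho>" unfolding \<rho>_def using T m1 by (simp add: real_root_gt_zero)
  have rho1: "\<rho> < 1" unfolding \<rho>_def using T m0 by simp
  have rhoT: "\<rho> ^ T = 1 - m" unfolding \<rho>_def using T m1 by simp
  have C0: "0 < 1 / (1 - m)" using m1 by simp
  have "\<forall>k. vnorm n (\<lambda>i. pr_x n E m phi k i - xs i) \<le> 1 / (1 - m) * \<rho> ^ k"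
  proof
    fix k
    define q where "q = k div T"
    have k1: "k = T * q + k mod T" unfolding q_def by simp
    have k2: "k mod T < T" using T by simp
    have kq: "k \<le> T * (q + 1)" using k1 k2 by (simp add: distrib_left)
    have "vnorm n (\<lambda>i. pr_x n E m phi k i - xs i) \<le> SS k / m" by (rule vnorm_bound)
    also have "\<dots> \<le> SS (q * T) / m" using SS_mono[of "q * T" k] m0 unfolding q_def
      by (simp add: divide_right_mono mult.commute)
    also have "\<dots> \<le> (1 - m) ^ q" using pw[of q] m0 by (simp add: field_simps)
    also have "\<dots> = (1 - m) ^ (q + 1) / (1 - m)" using m1 by simp
    also have "(1 - m) ^ (q + 1) = \<rho> ^ (T * (q + 1))" by (simp only: power_mult rhoT)
    also have "\<rho> ^ (T * (q + 1)) \<le> \<rho> ^ k" using kq rho0 rho1 by (intro power_decreasing) auto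
    finally show "vnorm n (\<lambda>i. pr_x n E m phi k i - xs i) \<le> 1 / (1 - m) * \<rho> ^ k"
      using m1 by (simp add: divide_right_mono)
  qed
  then show ?thesis using C0 rho0 rho1 by blast
qed

end

theorem theorem2:
  fixes n :: nat and E :: "(nat \<times> nat) set" and m :: real
    and xs :: "nat \<Rightarrow> real" and phi :: "nat \<Rightarrow> nat set"
  assumes n2: "n \<ge> 2"
    and E_nodes: "E \<subseteq> {1..n} \<times> {1..n}"
    and out_pos: "\<forall>j\<in>{1..n}. outdeg E j \<ge> 1"
    and m: "0 < m" "m < 1"
    and pr: "is_pagerank n E m xs"
    and phi_sub: "\<forall>k. phi k \<subseteq> {1..n}"
    and phi_inf: "\<forall>i\<in>{1..n}. infinite {k. i \<in> phi k}"
  shows "(\<lambda>k. vnorm n (\<lambda>i. pr_x n E m phi k i - xs i)) \<longlonglongrightarrow> 0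
         \<and> (\<forall>T::nat. T > 0 \<longrightarrow>
              (\<forall>k. \<forall>i\<in>{1..n}. \<exists>l\<in>{k..<k+T}. i \<in> phi l) \<longrightarrow>
              (\<exists>C>0. \<exists>\<rho>. 0 < \<rho> \<and> \<rho> < 1 \<and>
                 (\<forall>k. vnorm n (\<lambda>i. pr_x n E m phi k i - xs i) \<le> C * \<rho> ^ k)))"
proof -
  interpret prs n E m xs phi
    by unfold_locales (use assms in auto)
  show ?thesis using conv_part[OF phi_inf] exp_part by blast
qed

end
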